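(* With notation as in the context, suppose the edge localization graph $\bar{\mathcal{G}}$ has an oriented spanning tree with root $r$, and $r$ knows the bearing vector $\mathbf{g}_{v_1 r}$ to one of its neighbors $v_1$ in $\bar{\mathcal{G}}$. Let $l$ be the edge agent corresponding to the edge $(r,v_1)\in\bar{\mathcal{E}}$, and run the estimation dynamics $\dot{\hat z}_k(t)=\sum_{j\in\mathcal{N}_k}\bigl(e^{-\mathrm{i}\theta_{jk}}\hat z_j(t)-\hat z_k(t)\bigr)$ for all $k\neq l$, while the edge agent $l$ does not update, i.e. $\hat z_l(t)=z_l$ for all $t\ge t_0$ (the other initial estimates $\hat z_k(t_0)$ being arbitrary). Then the estimate $\hat{\mathbf{z}}(t)=[\hat z_1(t),\dots,\hat z_M(t)]^T$ converges exponentially to the true value $\mathbf{z}$.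
   Context: Setting. There are $N$ agents $\mathcal{V}=\{1,\dots,N\}$ at distinct positions $\mathbf{p}_u\in\mathbb{R}^2$. The bearing vector is $\mathbf{g}_{vu}=(\mathbf{p}_v-\mathbf{p}_u)/\|\mathbf{p}_v-\mathbf{p}_u\|$ and $\angle\mathbf{g}_{vu}\in[-\pi,\pi)$ its angle in a fixed global frame. For distinct agents $u,v,w$, $\alpha^{u}_{wv}\in[-\pi,\pi)$ denotes the counterclockwise angle at $u$ from $\mathbf{g}_{vu}$ to $\mathbf{g}_{wu}$. A set $\mathcal{S}$ of measured subtended angles is given, with $\alpha^{u}_{wv}\in\mathcal{S}$ iff $\alpha^{u}_{vw}\in\mathcal{S}$. Standing assumption: if an agent measures subtended angles between two or more pairs of other agents, all bearing vectors associated with these measurements are related to each other through them (so that the subtended angle at that agent between any two of these agents is determined by its measurements). The communication graph $\mathcal{G}=(\mathcal{V},\mathcal{E})$ has as edges exactly the ordered pairs $(u,v),(v,u),(u,w),(w,u)$ for all $\alpha^{u}_{wv}\in\mathcal{S}$; it is symmetric and assumed connected. Edge localization graph $\bar{\mathcal{G}}=(\bar{\mathcal{V}},\bar{\mathcal{E}})$: for each $(u,v)\in\mathcal{E}$ with no $w$ such that $\alpha^{v}_{wu}\in\mathcal{S}$, introduce a new virtual vertex $\bar v^{u}$ (distinct for distinct such pairs), co-located with agent $v$; $\bar{\mathcal{E}}$ is obtained from $\mathcal{E}$ by replacing each such pair $(u,v),(v,u)$ by $(u,\bar v^{u}),(\bar v^{u},u)$; $\bar{\mathcal{V}}$ consists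 of the agents that measure at least one subtended angle together with all virtual vertices. For $a\in\bar{\mathcal{V}}$ let $\rho(a)$ be the real agent it is (co-located with): $\rho(\bar v^u)=v$, $\rho(v)=v$; bearing vectors involving virtual vertices are those of the corresponding real agents. The directed line graph $L(\bar{\mathcal{G}})$ has vertex set $\bar{\mathcal{E}}$ and an edge $(e_1,e_2)$ whenever the head of $e_1$ equals the tail of $e_2$. The localization interaction graph $\mathcal{G}'=(\mathcal{V}',\mathcal{E}')$ is $L(\bar{\mathcal{G}})$ with vertices relabelled by a bijection onto $\mathcal{V}'=\{1,\dots,M\}$, $M=|\bar{\mathcal{E}}|$; vertex $k$ corresponding to $(a,b)\in\bar{\mathcal{E}}$ is the edge agent $k$; its neighbor set is $\mathcal{N}_k=\{j:(k,j)\in\mathcal{E}'\}$. For edge agent $k$ corresponding to $(a,b)$ set $\theta_k=\angle\mathbf{g}_{\rho(b)\rho(a)}$ and $z_k=e^{\mathrm{i}\theta_k}$, $\mathbf{z}=[z_1,\dots,z_M]^T$. For $j\in\mathcal{N}_k$ with $j$ corresponding to $(b,c)$, write $u=\rho(a)$, $v=\rho(b)$, $w=\rho(c)$ and set $\theta_{jk}=\mathrm{PV}(\alpha^{v}_{wu}+\pi)$ if $w\neq u$ and $\theta_{jk}=-\pi$ if $w=u$, where $\mathrm{PV}(\theta)=[(\theta+\pi)\bmod 2\pi]-\pi$. An oriented spanning tree of a directed graph with root $r$ is an acyclic subgraph containing all vertices in which every vertex other than $r$ has a directed path to $r$. *)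

theory Defs
  imports "HOL-Analysis.Analysis"
begin

text \<open>Agents are natural numbers in {1..N}; positions in R^2 are encoded as complex numbers.
  A measured subtended angle alpha^u_{wv} in S is encoded as the triple (u, w, v).
  Vertices of the edge localization graph: (v, None) is the real agent v,
  (v, Some u) is the virtual vertex vbar^u co-located with v.\<close>

type_synonym vtx = "nat \<times> nat option"

definition PV :: "real \<Rightarrow> real" where
  "PV \<theta> = \<theta> - 2 * pi * of_int \<lfloor>(\<theta> + pi) / (2 * pi)\<rfloor>"

definition ang :: "complex \<Rightarrow> real" where
  "ang g = PV (Arg g)"

definition bearing :: "(nat \<Rightarrow> complex) \<Rightarrow> nat \<Rightarrow> nat \<Rightarrow> complex" where
  "bearing p v u = (p v - p u) / of_real (cmod (p v - p u))"

text \<open>alpha p u w v = alpha^u_{wv}: ccw angle at u from g_{vu} to g_{wu}, in [-pi, pi).\<close>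
definition alpha :: "(nat \<Rightarrow> complex) \<Rightarrow> nat \<Rightarrow> nat \<Rightarrow> nat \<Rightarrow> real" where
  "alpha p u w v = PV (ang (bearing p w u) - ang (bearing p v u))"

definition comm_edges :: "(nat \<times> nat \<times> nat) set \<Rightarrow> (nat \<times> nat) set" where
  "comm_edges S = {e. \<exists>u w v. (u, w, v) \<in> S \<and> e \<in> {(u, v), (v, u), (u, w), (w, u)}}"

definition measures :: "(nat \<times> nat \<times> nat) set \<Rightarrow> nat \<Rightarrow> nat \<Rightarrow> bool" where
  "measures S v u \<longleftrightarrow> (\<exists>w. (v, w, u) \<in> S)"

definition elg_edges :: "(nat \<times> nat \<times> nat) set \<Rightarrow> (vtx \<times> vtx) set" where
  "elg_edges S =
     {((u, None), (v, None)) | u v. (u, v) \<in> comm_edges S \<and> measures S v u \<and> measures S u v}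
   \<union> {((u, None), (v, Some u)) | u v. (u, v) \<in> comm_edges S \<and> \<not> measures S v u}
   \<union> {((v, Some u), (u, None)) | u v. (u, v) \<in> comm_edges S \<and> \<not> measures S v u}"

definition elg_vertices :: "(nat \<times> nat \<times> nat) set \<Rightarrow> vtx set" where
  "elg_vertices S =
     {(v, None) | v. \<exists>w x. (v, w, x) \<in> S}
   \<union> {(v, Some u) | u v. (u, v) \<in> comm_edges S \<and> \<not> measures S v u}"

definition rho :: "vtx \<Rightarrow> nat" where
  "rho a = fst a"

definition has_oriented_spanning_tree :: "'v set \<Rightarrow> ('v \<times> 'v) set \<Rightarrow> 'v \<Rightarrow> bool" where
  "has_oriented_spanning_tree Vs Es r \<longleftrightarrow>
     r \<in> Vs \<and> (\<exists>T. T \<subseteq> Es \<and> acyclic T \<and> (\<forall>v\<in>Vs. v \<noteq> r \<longrightarrow> (v, r) \<in> T\<^sup>+))"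

text \<open>Neighbour set N_k in the localization interaction graph (line graph of the edge
  localization graph, relabelled by lab : {1..M} -> edges).\<close>
definition li_nbrs :: "(nat \<Rightarrow> vtx \<times> vtx) \<Rightarrow> nat \<Rightarrow> nat \<Rightarrow> nat set" where
  "li_nbrs lab M k = {j \<in> {1..M}. snd (lab k) = fst (lab j)}"

definition theta_edge :: "(nat \<Rightarrow> complex) \<Rightarrow> (nat \<Rightarrow> vtx \<times> vtx) \<Rightarrow> nat \<Rightarrow> real" where
  "theta_edge p lab k = ang (bearing p (rho (snd (lab k))) (rho (fst (lab k))))"

definition zval :: "(nat \<Rightarrow> complex) \<Rightarrow> (nat \<Rightarrow> vtx \<times> vtx) \<Rightarrow> nat \<Rightarrow> complex" where
  "zval p lab k = exp (\<i> * of_real (theta_edge p lab k))"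

text \<open>theta_{jk} for j in N_k, k ~ (a,b), j ~ (b,c).\<close>
definition theta_rel :: "(nat \<Rightarrow> complex) \<Rightarrow> (nat \<Rightarrow> vtx \<times> vtx) \<Rightarrow> nat \<Rightarrow> nat \<Rightarrow> real" where
  "theta_rel p lab j k =
     (let u = rho (fst (lab k)); v = rho (snd (lab k)); w = rho (snd (lab j))
      in if w \<noteq> u then PV (alpha p v w u + pi) else - pi)"

end

theory Submission
  imports Defs
begin


lemma deriv_normsq:
  fixes f :: "real \<Rightarrow> complex"
  assumes "(f has_vector_derivative D) (at t within S)"
  shows "((\<lambda>s. (cmod (f s))\<^sup>2) has_real_derivative (2 * inner (f t) D)) (at t within S)"
proof -
  have d: "(f has_derivative (\<lambda>h. h *\<^sub>R D)) (at t within S)"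
    using assms by (simp add: has_vector_derivative_def)
  have "((\<lambda>s. inner (f s) (f s)) has_derivative (\<lambda>h. inner (f t) (h *\<^sub>R D) + inner (h *\<^sub>R D) (f t))) (at t within S)"
    by (rule has_derivative_inner[OF d d])
  moreover have "(\<lambda>h. inner (f t) (h *\<^sub>R D) + inner (h *\<^sub>R D) (f t)) = (*) (2 * inner (f t) D)"
    by (auto simp: inner_commute fun_eq_iff algebra_simps)
  ultimately show ?thesis
    by (simp add: has_field_derivative_def power2_norm_eq_inner)
qed

lemma left_le:
  fixes f :: "real \<Rightarrow> real"
  assumes "continuous_on {t0..} f" "t0 < s" "\<And>t. t0 \<le> t \<Longrightarrow> t < s \<Longrightarrow> f t \<le> 0"
  shows "f s \<le> 0"
proof -
  have "(f \<longlongrightarrow> f s) (at s within {t0..})"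
    using assms(1,2) by (simp add: continuous_on_def)
  hence "(f \<longlongrightarrow> f s) (at s within {t0..s})"
    by (rule tendsto_within_subset) auto
  hence L: "(f \<longlongrightarrow> f s) (at_left s)"
    using assms(2) by (simp add: at_within_Icc_at_left)
  have "eventually (\<lambda>x. x \<in> {t0<..<s}) (at_left s)"
    using assms(2) by (rule eventually_at_left_real)
  hence "eventually (\<lambda>x. f x \<le> 0) (at_left s)"
    by eventually_elim (use assms(3) in auto)
  then show ?thesis
    using tendsto_upperbound[OF L] by (simp add: trivial_limit_at_left_real)
qed

lemma deriv_nonneg_left:
  fixes f :: "real \<Rightarrow> real"
  assumes "(f has_real_derivative D) (at s within {t0..})" "t0 < s"
    "\<And>t. t0 \<le> t \<Longrightarrow> t < s \<Longrightarrow> f t \<le> f s"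
  shows "D \<ge> 0"
proof -
  have "((\<lambda>y. (f y - f s) / (y - s)) \<longlongrightarrow> D) (at s within {t0..})"
    using assms(1) by (simp add: has_field_derivative_iff)
  hence "((\<lambda>y. (f y - f s) / (y - s)) \<longlongrightarrow> D) (at s within {t0..s})"
    by (rule tendsto_within_subset) auto
  hence L: "((\<lambda>y. (f y - f s) / (y - s)) \<longlongrightarrow> D) (at_left s)"
    using assms(2) by (simp add: at_within_Icc_at_left)
  have "eventually (\<lambda>x. x \<in> {t0<..<s}) (at_left s)"
    using assms(2) by (rule eventually_at_left_real)
  hence "eventually (\<lambda>x. 0 \<le> (f x - f s) / (x - s)) (at_left s)"
  proof eventually_elim
    case (elim x)
    then have "f x - f s \<le> 0" "x - s < 0" using assms(3)[of x] by auto
    then show ?case by (simp add: divide_nonpos_neg)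
  qed
  then show ?thesis
    using tendsto_lowerbound[OF L] by (simp add: trivial_limit_at_left_real)
qed


lemma pos_lower_bound:
  fixes s :: "nat \<Rightarrow> real"
  assumes "finite K" "\<And>k. k \<in> K \<Longrightarrow> s k > 0"
  shows "\<exists>d>0. \<forall>k\<in>K. d \<le> s k"
proof -
  define d where "d = Min (insert 1 (s ` K))"
  have "d \<in> insert 1 (s ` K)" unfolding d_def using assms(1) by (intro Min_in) auto
  hence "d > 0" using assms(2) by auto
  moreover have "\<forall>k\<in>K. d \<le> s k" unfolding d_def using assms(1) by auto
  ultimately show ?thesis by blast
qed

lemma core:
  fixes K :: "nat set" and Nb :: "nat \<Rightarrow> nat set" and c :: "nat \<Rightarrow> nat \<Rightarrow> complex"
    and e :: "real \<Rightarrow> nat \<Rightarrow> complex" and w :: "nat \<Rightarrow> real"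
  assumes fin: "finite K" and lK: "l \<notin> K"
    and NbK: "\<And>k. k \<in> K \<Longrightarrow> Nb k \<subseteq> insert l K"
    and Nbfin: "\<And>k. k \<in> K \<Longrightarrow> finite (Nb k)"
    and el: "\<And>t. t \<ge> t0 \<Longrightarrow> e t l = 0"
    and der: "\<And>k t. k \<in> K \<Longrightarrow> t \<ge> t0 \<Longrightarrow>
       ((\<lambda>s. e s k) has_vector_derivative (\<Sum>j\<in>Nb k. c j k * e t j - e t k)) (at t within {t0..})"
    and cn: "\<And>j k. k \<in> K \<Longrightarrow> j \<in> Nb k \<Longrightarrow> cmod (c j k) = 1"
    and wl: "w l = 0" and wpos: "\<And>k. k \<in> K \<Longrightarrow> w k > 0"
    and wdom: "\<And>k. k \<in> K \<Longrightarrow> (\<Sum>j\<in>Nb k. w j) < real (card (Nb k)) * w k"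
  shows "\<exists>C \<delta>. \<delta> > 0 \<and> C \<ge> 0 \<and> (\<forall>t\<ge>t0. \<forall>k\<in>K. cmod (e t k) \<le> C * exp (- \<delta> * (t - t0)))"
proof -
  obtain \<delta> where d0: "\<delta> > 0" and dk: "\<forall>k\<in>K. \<delta> \<le> (real (card (Nb k)) * w k - (\<Sum>j\<in>Nb k. w j)) / (2 * w k)"
    using pos_lower_bound[OF fin, of "\<lambda>k. (real (card (Nb k)) * w k - (\<Sum>j\<in>Nb k. w j)) / (2 * w k)"]
      wpos wdom by force
  have dom2: "(\<Sum>j\<in>Nb k. w j) + 2 * \<delta> * w k \<le> real (card (Nb k)) * w k" if "k \<in> K" for k
  proof -
    have "\<delta> * (2 * w k) \<le> real (card (Nb k)) * w k - (\<Sum>j\<in>Nb k. w j)"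
      using dk that wpos[OF that] by (simp add: le_divide_eq)
    then show ?thesis by (simp add: algebra_simps)
  qed
  define R where "R = 1 + (\<Sum>k\<in>K. cmod (e t0 k) / w k)"
  define \<phi> where "\<phi> t = R * exp (- \<delta> * (t - t0))" for t
  have R0: "R > 0" unfolding R_def using wpos by (smt (verit) sum_nonneg divide_nonneg_pos norm_ge_zero)
  have phipos: "\<phi> t > 0" for t unfolding \<phi>_def using R0 by simp
  have init: "cmod (e t0 k) < w k * \<phi> t0" if "k \<in> K" for k
  proof -
    have "cmod (e t0 k) / w k \<le> (\<Sum>k\<in>K. cmod (e t0 k) / w k)"
      using fin that wpos by (intro member_le_sum) (auto intro!: divide_nonneg_pos)
    hence "cmod (e t0 k) / w k < R" unfolding R_def by simp
    thus ?thesis using wpos[OF that] by (simp add: \<phi>_def divide_less_eq mult.commute)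
  qed
  have cont: "continuous_on {t0..} (\<lambda>t. e t k)" if "k \<in> K" for k
    unfolding continuous_on_eq_continuous_within
    using der[OF that] has_vector_derivative_continuous by blast
  have contphi: "continuous_on {t0..} \<phi>" unfolding \<phi>_def by (intro continuous_intros)
  have claim: "\<forall>t\<ge>t0. \<forall>k\<in>K. cmod (e t k) < w k * \<phi> t"
  proof (rule ccontr)
    assume neg: "\<not> ?thesis"
    define B where "B = {t. t0 \<le> t \<and> (\<exists>k\<in>K. w k * \<phi> t \<le> cmod (e t k))}"
    have Bne: "B \<noteq> {}" using neg unfolding B_def by force
    have Beq: "B = (\<Union>k\<in>K. {t0..} \<inter> (\<lambda>t. w k * \<phi> t - cmod (e t k)) -` {..0})"
      unfolding B_def by auto
    have "closed B" unfolding Beq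
      using fin by (intro closed_UN ballI continuous_closed_preimage continuous_intros cont contphi) auto
    moreover have "bdd_below B" unfolding B_def by (rule bdd_belowI[of _ t0]) auto
    ultimately have sB: "Inf B \<in> B" using Bne closed_contains_Inf by blast
    define s where "s = Inf B"
    from sB obtain k where kK: "k \<in> K" and s0: "t0 \<le> s" and ks: "w k * \<phi> s \<le> cmod (e s k)"
      unfolding B_def s_def by auto
    have "s \<noteq> t0" using init[OF kK] ks by auto
    hence st: "t0 < s" using s0 by simp
    have before: "cmod (e t j) < w j * \<phi> t" if "t0 \<le> t" "t < s" "j \<in> K" for t j
    proof (rule ccontr)
      assume "\<not> ?thesis"
      hence "t \<in> B" unfolding B_def using that by force
      hence "s \<le> t" unfolding s_def using \<open>bdd_below B\<close> by (rule cInf_lower)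
      thus False using that by simp
    qed
    have atS: "cmod (e s j) \<le> w j * \<phi> s" if "j \<in> K" for j
    proof -
      have "(\<lambda>t. cmod (e t j) - w j * \<phi> t) s \<le> 0"
        by (rule left_le[OF _ st]) (use before that in \<open>auto intro!: continuous_intros cont contphi less_imp_le simp: algebra_simps\<close>)
      thus ?thesis by simp
    qed
    have eq: "cmod (e s k) = w k * \<phi> s" using atS[OF kK] ks by simp
    have atS': "cmod (e s j) \<le> w j * \<phi> s" if "j \<in> Nb k" for j
    proof (cases "j = l")
      case True thus ?thesis using el[OF s0] wl by simp
    next
      case False thus ?thesis using NbK[OF kK] that atS by auto
    qed
    define D where "D = (\<Sum>j\<in>Nb k. c j k * e s j - e s k)"
    define g where "g t = (cmod (e t k))\<^sup>2 - (w k * \<phi> t)\<^sup>2" for t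
    have dphi: "(\<phi> has_real_derivative (- \<delta> * \<phi> s)) (at s within {t0..})"
      unfolding \<phi>_def by (auto intro!: derivative_eq_intros)
    have dg: "(g has_real_derivative (2 * inner (e s k) D - 2 * (w k * \<phi> s) * (w k * (- \<delta> * \<phi> s)))) (at s within {t0..})"
    proof -
      have dw: "((\<lambda>t. w k * \<phi> t) has_real_derivative (w k * (- \<delta> * \<phi> s))) (at s within {t0..})"
        by (rule DERIV_cmult[OF dphi])
      have dw2: "((\<lambda>t. (w k * \<phi> t)\<^sup>2) has_real_derivative (of_nat 2 * ((w k * (- \<delta> * \<phi> s)) * (w k * \<phi> s) ^ (2 - Suc 0)))) (at s within {t0..})"
        by (rule DERIV_power[OF dw])
      show ?thesis unfolding g_def D_def
        using DERIV_diff[OF deriv_normsq[OF der[OF kK s0]] dw2] by (simp add: algebra_simps)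
    qed
    have gle: "g t \<le> g s" if "t0 \<le> t" "t < s" for t
    proof -
      have "cmod (e t k) < w k * \<phi> t" using before[OF that kK] .
      hence "(cmod (e t k))\<^sup>2 \<le> (w k * \<phi> t)\<^sup>2" by (intro power_mono) auto
      thus ?thesis unfolding g_def using eq by simp
    qed
    have gd: "0 \<le> 2 * inner (e s k) D - 2 * (w k * \<phi> s) * (w k * (- \<delta> * \<phi> s))"
      by (rule deriv_nonneg_left[OF dg st gle])
    have "inner (e s k) D = (\<Sum>j\<in>Nb k. inner (e s k) (c j k * e s j)) - real (card (Nb k)) * inner (e s k) (e s k)"
    proof -
      have "complex_of_nat (card (Nb k)) * e s k = real (card (Nb k)) *\<^sub>R e s k"
        by (simp add: scaleR_conv_of_real)
      thus ?thesis unfolding D_def by (simp add: inner_sum_right inner_diff_right sum_subtractf)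
    qed
    also have "\<dots> \<le> (\<Sum>j\<in>Nb k. cmod (e s k) * (w j * \<phi> s)) - real (card (Nb k)) * (cmod (e s k))\<^sup>2"
    proof -
      have "inner (e s k) (c j k * e s j) \<le> cmod (e s k) * (w j * \<phi> s)" if "j \<in> Nb k" for j
      proof -
        have "inner (e s k) (c j k * e s j) \<le> cmod (e s k) * cmod (c j k * e s j)"
          by (rule norm_cauchy_schwarz)
        also have "\<dots> = cmod (e s k) * cmod (e s j)" using cn[OF kK that] by (simp add: norm_mult)
        also have "\<dots> \<le> cmod (e s k) * (w j * \<phi> s)" using atS'[OF that] by (intro mult_left_mono) auto
        finally show ?thesis .
      qed
      thus ?thesis by (simp add: power2_norm_eq_inner sum_mono)
    qed
    also have "\<dots> = (w k * \<phi> s) * \<phi> s * ((\<Sum>j\<in>Nb k. w j) - real (card (Nb k)) * w k)"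
      unfolding eq by (simp add: sum_distrib_left sum_distrib_right algebra_simps power2_eq_square)
    also have "\<dots> \<le> (w k * \<phi> s) * \<phi> s * (- 2 * \<delta> * w k)"
      using dom2[OF kK] wpos[OF kK] phipos[of s] by (intro mult_left_mono) auto
    finally have "inner (e s k) D \<le> - 2 * \<delta> * (w k * \<phi> s)\<^sup>2"
      by (simp add: power2_eq_square algebra_simps)
    moreover have "(w k * \<phi> s)\<^sup>2 > 0" using wpos[OF kK] phipos[of s] by simp
    moreover have "2 * (w k * \<phi> s) * (w k * (- \<delta> * \<phi> s)) = - 2 * (\<delta> * (w k * \<phi> s)\<^sup>2)"
      by (simp add: power2_eq_square algebra_simps)
    moreover have "\<delta> * (w k * \<phi> s)\<^sup>2 > 0" using d0 \<open>(w k * \<phi> s)\<^sup>2 > 0\<close> by simp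
    ultimately show False using gd by linarith
  qed
  define C where "C = R * (\<Sum>k\<in>K. w k)"
  have "C \<ge> 0" unfolding C_def using R0 wpos by (intro mult_nonneg_nonneg sum_nonneg) (auto intro: less_imp_le)
  moreover have "\<forall>t\<ge>t0. \<forall>k\<in>K. cmod (e t k) \<le> C * exp (- \<delta> * (t - t0))"
  proof (intro allI impI ballI)
    fix t k assume "t0 \<le> t" "k \<in> K"
    have "w k \<le> (\<Sum>k\<in>K. w k)" using fin \<open>k \<in> K\<close> wpos by (intro member_le_sum) (auto intro: less_imp_le)
    hence "w k * \<phi> t \<le> C * exp (- \<delta> * (t - t0))"
      unfolding C_def \<phi>_def using R0 by (simp add: mult.assoc mult_left_mono mult_right_mono)
    thus "cmod (e t k) \<le> C * exp (- \<delta> * (t - t0))" using claim \<open>t0 \<le> t\<close> \<open>k \<in> K\<close> by force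
  qed
  ultimately show ?thesis using d0 by blast
qed



lemma weights:
  fixes A :: "nat set" and Nb :: "nat \<Rightarrow> nat set"
  assumes fin: "finite A" and lA: "l \<in> A" and NbA: "\<And>k. k \<in> A \<Longrightarrow> Nb k \<subseteq> A"
    and reach: "\<And>k. k \<in> A \<Longrightarrow> (k, l) \<in> {(x, y). x \<in> A \<and> y \<in> Nb x}\<^sup>*"
  shows "\<exists>w::nat \<Rightarrow> real. w l = 0 \<and> (\<forall>k\<in>A - {l}. w k > 0 \<and> (\<Sum>j\<in>Nb k. w j) < real (card (Nb k)) * w k)"
proof -
  define Rel where "Rel = {(x, y). x \<in> A \<and> y \<in> Nb x}"
  define D where "D k = (LEAST d. (k, l) \<in> Rel ^^ d)" for k
  have Dp: "(k, l) \<in> Rel ^^ D k" if kA0: "k \<in> A" for k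
  proof -
    obtain d where "(k, l) \<in> Rel ^^ d" using reach[OF kA0] unfolding Rel_def rtrancl_power by blast
    thus ?thesis unfolding D_def by (rule LeastI)
  qed
  have Dmin: "D k \<le> d" if "(k, l) \<in> Rel ^^ d" for k d
    unfolding D_def using that by (rule Least_le)
  have Dl: "D l = 0" using Dmin[of l 0] by simp
  define nb where "nb = 2 + (\<Sum>k\<in>A. card (Nb k))"
  define \<epsilon> :: real where "\<epsilon> = 1 / real nb"
  have nbk: "card (Nb k) < nb" if "k \<in> A" for k
  proof -
    have "card (Nb k) \<le> (\<Sum>k\<in>A. card (Nb k))" using fin that by (intro member_le_sum) auto
    thus ?thesis unfolding nb_def by simp
  qed
  have nb2: "real nb \<ge> 2" unfolding nb_def by (simp add: sum_nonneg)
  have e0: "\<epsilon> > 0" "\<epsilon> < 1" unfolding \<epsilon>_def using nb2 by auto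
  define w where "w k = 1 - \<epsilon> ^ D k" for k
  have "w l = 0" unfolding w_def Dl by simp
  moreover have "w k > 0 \<and> (\<Sum>j\<in>Nb k. w j) < real (card (Nb k)) * w k" if kA: "k \<in> A - {l}" for k
  proof -
    have "D k \<noteq> 0" using Dp[of k] kA by (metis DiffE insertCI relpow_0_E)
    then obtain d where Dk: "D k = Suc d" by (cases "D k") auto
    obtain j0 where j0: "(k, j0) \<in> Rel" "(j0, l) \<in> Rel ^^ d"
      using relpow_Suc_D2[of k l d Rel] Dp[of k] kA Dk by auto
    have j0N: "j0 \<in> Nb k" using j0 unfolding Rel_def by auto
    have Dj0: "D j0 \<le> d" using Dmin[OF j0(2)] .
    have finN: "finite (Nb k)" using NbA kA fin finite_subset by blast
    have wle1: "w j \<le> 1" for j unfolding w_def using e0 by simp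
    have wj0: "w j0 \<le> 1 - \<epsilon> ^ d" unfolding w_def using e0 Dj0 by (simp add: power_decreasing)
    have "(\<Sum>j\<in>Nb k. w j) = w j0 + (\<Sum>j\<in>Nb k - {j0}. w j)"
      using finN j0N by (simp add: sum.remove)
    also have "\<dots> \<le> (1 - \<epsilon> ^ d) + real (card (Nb k) - 1)"
      using wj0 sum_bounded_above[of "Nb k - {j0}" w 1] wle1 finN j0N by (simp add: card_Diff_singleton)
    also have "\<dots> = real (card (Nb k)) - \<epsilon> ^ d"
      using finN j0N card_gt_0_iff[of "Nb k"] by (auto simp: of_nat_diff)
    also have "\<dots> < real (card (Nb k)) * w k"
    proof -
      have "real (card (Nb k)) * \<epsilon> < 1"
        using nbk[of k] kA e0 unfolding \<epsilon>_def by (simp add: field_simps)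
      hence "real (card (Nb k)) * \<epsilon> * \<epsilon> ^ d < \<epsilon> ^ d" using e0 by simp
      thus ?thesis unfolding w_def Dk by (simp add: algebra_simps)
    qed
    finally have "(\<Sum>j\<in>Nb k. w j) < real (card (Nb k)) * w k" .
    moreover have "w k > 0" unfolding w_def Dk using e0 power_strict_decreasing[of 0 "Suc d" \<epsilon>] by simp
    ultimately show ?thesis by simp
  qed
  ultimately show ?thesis by blast
qed


lemma cis_shift: "cis (x + 2 * pi * of_int n) = cis x"
proof -
  have "cis (2 * pi * real_of_int n) = 1" by (rule cis_multiple_2pi) simp
  thus ?thesis by (simp add: cis_mult[symmetric])
qed

lemma cis_PV: "cis (PV x) = cis x"
  unfolding PV_def using cis_shift[of "x - 2 * pi * of_int \<lfloor>(x + pi) / (2 * pi)\<rfloor>" "\<lfloor>(x + pi) / (2 * pi)\<rfloor>"]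
  by simp

lemma cis_mPV: "cis (- PV x) = cis (- x)"
  unfolding PV_def using cis_shift[of "- x" "\<lfloor>(x + pi) / (2 * pi)\<rfloor>"]
  by (simp add: algebra_simps)

lemma bearing_sgn: "bearing p v u = sgn (p v - p u)"
  unfolding bearing_def by (simp add: sgn_div_norm divide_inverse scaleR_conv_of_real mult.commute)

lemma cis_ang_sgn: "z \<noteq> 0 \<Longrightarrow> cis (ang (sgn z)) = sgn z"
  unfolding ang_def cis_PV using cis_Arg[of "sgn z"] by (simp add: sgn_zero_iff)

lemma equil:
  assumes "u \<noteq> v" "v \<noteq> w" "p u \<noteq> p v" "p w \<noteq> p v"
  shows "cis (- (if w \<noteq> u then PV (alpha p v w u + pi) else - pi)) * cis (ang (bearing p w v))
         = cis (ang (bearing p v u))"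
proof -
  have zj: "cis (ang (bearing p w v)) = sgn (p w - p v)"
    using assms by (simp add: bearing_sgn cis_ang_sgn)
  have zk: "cis (ang (bearing p v u)) = sgn (p v - p u)"
    using assms by (simp add: bearing_sgn cis_ang_sgn)
  have gu: "cis (ang (bearing p u v)) = sgn (p u - p v)"
    using assms by (simp add: bearing_sgn cis_ang_sgn)
  have neg: "sgn (p v - p u) = - sgn (p u - p v)"
    by (metis minus_diff_eq sgn_minus)
  have nz: "sgn (p w - p v) \<noteq> 0" using assms by (simp add: sgn_zero_iff)
  show ?thesis
  proof (cases "w = u")
    case True
    thus ?thesis using zj zk neg by simp
  next
    case False
    have "cis (- PV (alpha p v w u + pi)) = cis (- (alpha p v w u + pi))" by (rule cis_mPV)
    also have "\<dots> = - cis (- alpha p v w u)" 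
    proof -
      have "cis (- pi) = -1" by (simp add: complex_eq_iff)
      moreover have "cis (- (alpha p v w u + pi)) = cis (- alpha p v w u) * cis (- pi)"
        by (simp add: cis_mult)
      ultimately show ?thesis by simp
    qed
    also have "cis (- alpha p v w u) = cis (- (ang (bearing p w v) - ang (bearing p u v)))"
      unfolding alpha_def by (rule cis_mPV)
    also have "\<dots> = cis (ang (bearing p u v)) / cis (ang (bearing p w v))"
      by (simp add: cis_divide)
    finally have c: "cis (- PV (alpha p v w u + pi)) = - (sgn (p u - p v) / sgn (p w - p v))"
      using zj gu by simp
    show ?thesis using False c zj zk neg nz by simp
  qed
qed


lemma comm_props:
  assumes S_agents: "\<forall>(u, w, v) \<in> S. u \<in> {1..N} \<and> v \<in> {1..N} \<and> w \<in> {1..N}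
                     \<and> u \<noteq> v \<and> u \<noteq> w \<and> v \<noteq> w"
    and "(u, v) \<in> comm_edges S"
  shows "u \<in> {1..N} \<and> v \<in> {1..N} \<and> u \<noteq> v"
proof -
  obtain u' w v' where "(u', w, v') \<in> S" "(u, v) \<in> {(u', v'), (v', u'), (u', w), (w, u')}"
    using assms(2) unfolding comm_edges_def by blast
  thus ?thesis using S_agents by fastforce
qed

lemma elg_props:
  assumes S_agents: "\<forall>(u, w, v) \<in> S. u \<in> {1..N} \<and> v \<in> {1..N} \<and> w \<in> {1..N}
                     \<and> u \<noteq> v \<and> u \<noteq> w \<and> v \<noteq> w"
    and "e \<in> elg_edges S"
  shows "rho (fst e) \<in> {1..N} \<and> rho (snd e) \<in> {1..N} \<and> rho (fst e) \<noteq> rho (snd e)"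
  using assms(2) comm_props[OF S_agents] unfolding elg_edges_def rho_def
  by (auto; metis)

lemma head_vtx:
  assumes S_sym: "\<And>u w v. (u, w, v) \<in> S \<longleftrightarrow> (u, v, w) \<in> S"
    and "e \<in> elg_edges S"
  shows "snd e \<in> elg_vertices S"
proof -
  consider (a) u v where "e = ((u, None), (v, None))" "measures S v u"
    | (b) u v where "e = ((u, None), (v, Some u))" "(u, v) \<in> comm_edges S" "\<not> measures S v u"
    | (c) u v where "e = ((v, Some u), (u, None))" "(u, v) \<in> comm_edges S" "\<not> measures S v u"
    using assms(2) unfolding elg_edges_def by blast
  then show ?thesis
  proof cases
    case (a u v) thus ?thesis unfolding elg_vertices_def measures_def by auto
  next
    case (b u v) thus ?thesis unfolding elg_vertices_def by auto
  next
    case (c u v)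
    obtain u' w v' where S1: "(u', w, v') \<in> S" and S2: "(u, v) \<in> {(u', v'), (v', u'), (u', w), (w, u')}"
      using c(2) unfolding comm_edges_def by blast
    have "\<exists>w x. (u, w, x) \<in> S"
    proof -
      { assume "(u, v) = (v', u')"
        hence "measures S v u" using S1 unfolding measures_def by auto
        hence False using c(3) by simp }
      moreover
      { assume "(u, v) = (w, u')"
        hence "(v, v', u) \<in> S" using S1 S_sym by auto
        hence "measures S v u" unfolding measures_def by auto
        hence False using c(3) by simp }
      ultimately show ?thesis using S1 S2 by blast
    qed
    thus ?thesis using c(1) unfolding elg_vertices_def by auto
  qed
qed

lemma reach_lemma:
  assumes lab_bij: "bij_betw lab {1..M} E"
    and lM: "l \<in> {1..M}" "fst (lab l) = r"
    and path: "(b, r) \<in> E\<^sup>+"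
  shows "\<And>k. k \<in> {1..M} \<Longrightarrow> snd (lab k) = b \<Longrightarrow> (k, l) \<in> {(x, y). x \<in> {1..M} \<and> y \<in> li_nbrs lab M x}\<^sup>*"
  using path
proof (induction rule: converse_trancl_induct)
  case (base y)
  define j where "j = inv_into {1..M} lab (y, r)"
  have jM: "j \<in> {1..M}" and lj: "lab j = (y, r)"
    using base(1) lab_bij unfolding j_def
    by (auto simp: bij_betw_def inv_into_into f_inv_into_f)
  have "(k, j) \<in> {(x, y). x \<in> {1..M} \<and> y \<in> li_nbrs lab M x}"
    using base jM lj unfolding li_nbrs_def by auto
  moreover have "(j, l) \<in> {(x, y). x \<in> {1..M} \<and> y \<in> li_nbrs lab M x}"
    using jM lj lM unfolding li_nbrs_def by auto
  ultimately show ?case by (meson rtrancl.simps r_into_rtrancl rtrancl_trans)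
next
  case (step y z)
  define j where "j = inv_into {1..M} lab (y, z)"
  have jM: "j \<in> {1..M}" and lj: "lab j = (y, z)"
    using step(1) lab_bij unfolding j_def
    by (auto simp: bij_betw_def inv_into_into f_inv_into_f)
  have "(k, j) \<in> {(x, y). x \<in> {1..M} \<and> y \<in> li_nbrs lab M x}"
    using step jM lj unfolding li_nbrs_def by auto
  moreover have "(j, l) \<in> {(x, y). x \<in> {1..M} \<and> y \<in> li_nbrs lab M x}\<^sup>*"
    using step(3)[OF jM] lj by simp
  ultimately show ?case by (meson converse_rtrancl_into_rtrancl)
qed



theorem theorem4:
  fixes N M :: nat and p :: "nat \<Rightarrow> complex" and S :: "(nat \<times> nat \<times> nat) set"
    and lab :: "nat \<Rightarrow> vtx \<times> vtx" and r v1 :: vtx and l :: nat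
    and zhat :: "real \<Rightarrow> nat \<Rightarrow> complex" and t0 :: real
  assumes pos_distinct: "inj_on p {1..N}"
    and S_agents: "\<forall>(u, w, v) \<in> S. u \<in> {1..N} \<and> v \<in> {1..N} \<and> w \<in> {1..N}
                     \<and> u \<noteq> v \<and> u \<noteq> w \<and> v \<noteq> w"
    and S_sym: "\<And>u w v. (u, w, v) \<in> S \<longleftrightarrow> (u, v, w) \<in> S"
    and S_related: "\<And>u v w. v \<in> {x. \<exists>y. (u, y, x) \<in> S} \<Longrightarrow> w \<in> {x. \<exists>y. (u, y, x) \<in> S}
                      \<Longrightarrow> (v, w) \<in> {(x, y). (u, y, x) \<in> S}\<^sup>*"
    and G_connected: "\<forall>u\<in>{1..N}. \<forall>v\<in>{1..N}. (u, v) \<in> (comm_edges S)\<^sup>*"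
    and M_def: "M = card (elg_edges S)"
    and lab_bij: "bij_betw lab {1..M} (elg_edges S)"
    and tree: "has_oriented_spanning_tree (elg_vertices S) (elg_edges S) r"
    and v1_nbr: "(r, v1) \<in> elg_edges S"
    and l_def: "l \<in> {1..M}" "lab l = (r, v1)"
    and fixed_l: "\<forall>t\<ge>t0. zhat t l = zval p lab l"
    and dyn: "\<And>k t. k \<in> {1..M} \<Longrightarrow> k \<noteq> l \<Longrightarrow> t \<ge> t0 \<Longrightarrow>
       ((\<lambda>s. zhat s k) has_vector_derivative
          (\<Sum>j\<in>li_nbrs lab M k. exp (- \<i> * of_real (theta_rel p lab j k)) * zhat t j - zhat t k))
        (at t within {t0..})"
  shows "\<exists>C rate::real. rate > 0 \<and> (\<forall>t\<ge>t0.
           sqrt (\<Sum>k\<in>{1..M}. (cmod (zhat t k - zval p lab k))\<^sup>2) \<le> C * exp (- rate * (t - t0)))"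
proof -
  define Rel where "Rel = {(x, y). x \<in> {1..M} \<and> y \<in> li_nbrs lab M x}"
  have reach: "(k, l) \<in> Rel\<^sup>*" if kM: "k \<in> {1..M}" for k
  proof -
    have lkE: "lab k \<in> elg_edges S" using lab_bij kM by (auto simp: bij_betw_def)
    have hv: "snd (lab k) \<in> elg_vertices S" by (rule head_vtx[OF S_sym lkE])
    obtain T where T: "T \<subseteq> elg_edges S" "\<forall>v\<in>elg_vertices S. v \<noteq> r \<longrightarrow> (v, r) \<in> T\<^sup>+"
      using tree unfolding has_oriented_spanning_tree_def by blast
    show ?thesis
    proof (cases "snd (lab k) = r")
      case True
      hence "(k, l) \<in> Rel" unfolding Rel_def li_nbrs_def using kM l_def by auto
      thus ?thesis by blast
    next
      case False
      hence "(snd (lab k), r) \<in> (elg_edges S)\<^sup>+" using T hv trancl_mono by blast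
      from reach_lemma[OF lab_bij l_def(1) _ this kM refl] l_def(2)
      show ?thesis unfolding Rel_def by simp
    qed
  qed
  obtain w where w0: "w l = 0"
    and wk: "\<forall>k\<in>{1..M} - {l}. w k > 0 \<and> (\<Sum>j\<in>li_nbrs lab M k. w j) < real (card (li_nbrs lab M k)) * w k"
  proof -
    have "\<And>k. k \<in> {1..M} \<Longrightarrow> li_nbrs lab M k \<subseteq> {1..M}" unfolding li_nbrs_def by auto
    from weights[of "{1..M}" l "li_nbrs lab M", OF _ l_def(1) this] reach
    have "\<exists>w::nat \<Rightarrow> real. w l = 0 \<and> (\<forall>k\<in>{1..M} - {l}. w k > 0 \<and> (\<Sum>j\<in>li_nbrs lab M k. w j) < real (card (li_nbrs lab M k)) * w k)"
      unfolding Rel_def by simp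
    thus ?thesis using that by blast
  qed
  define c where "c j k = exp (- \<i> * of_real (theta_rel p lab j k))" for j k
  define e where "e t k = zhat t k - zval p lab k" for t k
  have eq: "c j k * zval p lab j = zval p lab k" if kM: "k \<in> {1..M}" and jN: "j \<in> li_nbrs lab M k" for j k
  proof -
    have jM: "j \<in> {1..M}" and fj: "fst (lab j) = snd (lab k)" using jN unfolding li_nbrs_def by auto
    have lkE: "lab k \<in> elg_edges S" using lab_bij kM by (auto simp: bij_betw_def)
    have ljE: "lab j \<in> elg_edges S" using lab_bij jM by (auto simp: bij_betw_def)
    note pk = elg_props[OF S_agents lkE] and pj = elg_props[OF S_agents ljE]
    have ne1: "p (rho (fst (lab k))) \<noteq> p (rho (snd (lab k)))"
      using pk pos_distinct by (metis inj_on_def)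
    have ne2: "p (rho (snd (lab j))) \<noteq> p (rho (snd (lab k)))"
      using pj pos_distinct fj by (metis inj_on_def)
    have "c j k = cis (- theta_rel p lab j k)" unfolding c_def cis_conv_exp by simp
    moreover have "zval p lab j = cis (ang (bearing p (rho (snd (lab j))) (rho (snd (lab k)))))"
      unfolding zval_def theta_edge_def cis_conv_exp fj by (simp add: mult.commute)
    moreover have "zval p lab k = cis (ang (bearing p (rho (snd (lab k))) (rho (fst (lab k)))))"
      unfolding zval_def theta_edge_def cis_conv_exp by (simp add: mult.commute)
    ultimately show ?thesis
      unfolding theta_rel_def Let_def
      using equil[of "rho (fst (lab k))" "rho (snd (lab k))" "rho (snd (lab j))" p] pk pj fj ne1 ne2
      by simp
  qed
  have core_app: "\<exists>C \<delta>. \<delta> > 0 \<and> C \<ge> 0 \<and> (\<forall>t\<ge>t0. \<forall>k\<in>{1..M} - {l}. cmod (e t k) \<le> C * exp (- \<delta> * (t - t0)))"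
  proof (rule core[where Nb = "li_nbrs lab M" and c = c and w = w and l = l])
    show "finite ({1..M} - {l})" by simp
    show "l \<notin> {1..M} - {l}" by simp
    show "\<And>k. k \<in> {1..M} - {l} \<Longrightarrow> li_nbrs lab M k \<subseteq> insert l ({1..M} - {l})"
      unfolding li_nbrs_def by auto
    show "\<And>k. k \<in> {1..M} - {l} \<Longrightarrow> finite (li_nbrs lab M k)"
      unfolding li_nbrs_def by auto
    show "\<And>t. t0 \<le> t \<Longrightarrow> e t l = 0" unfolding e_def using fixed_l by simp
    show "\<And>j k. k \<in> {1..M} - {l} \<Longrightarrow> j \<in> li_nbrs lab M k \<Longrightarrow> cmod (c j k) = 1"
    proof -
      fix j k
      have "c j k = cis (- theta_rel p lab j k)" unfolding c_def cis_conv_exp by simp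
      thus "cmod (c j k) = 1" by simp
    qed
    show "w l = 0" by (rule w0)
    show "\<And>k. k \<in> {1..M} - {l} \<Longrightarrow> 0 < w k" using wk by blast
    show "\<And>k. k \<in> {1..M} - {l} \<Longrightarrow> (\<Sum>j\<in>li_nbrs lab M k. w j) < real (card (li_nbrs lab M k)) * w k"
      using wk by blast
    show "((\<lambda>s. e s k) has_vector_derivative (\<Sum>j\<in>li_nbrs lab M k. c j k * e t j - e t k)) (at t within {t0..})"
      if kK: "k \<in> {1..M} - {l}" and tt: "t0 \<le> t" for k t
    proof -
      have d: "((\<lambda>s. zhat s k) has_vector_derivative
          (\<Sum>j\<in>li_nbrs lab M k. c j k * zhat t j - zhat t k)) (at t within {t0..})"
        using dyn[of k t] kK tt unfolding c_def by auto
      have "(\<Sum>j\<in>li_nbrs lab M k. c j k * zhat t j - zhat t k) = (\<Sum>j\<in>li_nbrs lab M k. c j k * e t j - e t k)"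
      proof (rule sum.cong[OF refl])
        fix j assume "j \<in> li_nbrs lab M k"
        hence "c j k * zval p lab j = zval p lab k" using eq kK by auto
        thus "c j k * zhat t j - zhat t k = c j k * e t j - e t k"
          unfolding e_def by (simp add: algebra_simps)
      qed
      hence "((\<lambda>s. zhat s k) has_vector_derivative
          (\<Sum>j\<in>li_nbrs lab M k. c j k * e t j - e t k)) (at t within {t0..})" using d by simp
      hence "((\<lambda>s. zhat s k - zval p lab k) has_vector_derivative
          ((\<Sum>j\<in>li_nbrs lab M k. c j k * e t j - e t k) - 0)) (at t within {t0..})"
        by (intro has_vector_derivative_diff has_vector_derivative_const)
      thus ?thesis unfolding e_def by simp
    qed
  qed
  then obtain C \<delta> where d0: "\<delta> > 0" and C0: "C \<ge> 0"
    and bnd: "\<forall>t\<ge>t0. \<forall>k\<in>{1..M} - {l}. cmod (e t k) \<le> C * exp (- \<delta> * (t - t0))" by blast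
  have "\<forall>t\<ge>t0. sqrt (\<Sum>k\<in>{1..M}. (cmod (zhat t k - zval p lab k))\<^sup>2) \<le> (sqrt (real M) * C) * exp (- \<delta> * (t - t0))"
  proof (intro allI impI)
    fix t assume tt: "t0 \<le> t"
    define X where "X = C * exp (- \<delta> * (t - t0))"
    have X0: "X \<ge> 0" unfolding X_def using C0 by simp
    have "(\<Sum>k\<in>{1..M}. (cmod (zhat t k - zval p lab k))\<^sup>2) \<le> (\<Sum>k\<in>{1..M}. X\<^sup>2)"
    proof (rule sum_mono)
      fix k assume kM: "k \<in> {1..M}"
      show "(cmod (zhat t k - zval p lab k))\<^sup>2 \<le> X\<^sup>2"
      proof (cases "k = l")
        case True thus ?thesis using fixed_l tt by simp
      next
        case False
        hence "cmod (e t k) \<le> X" using bnd tt kM unfolding X_def by auto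
        thus ?thesis unfolding e_def by (intro power_mono) auto
      qed
    qed
    also have "\<dots> = real M * X\<^sup>2" by simp
    finally have "sqrt (\<Sum>k\<in>{1..M}. (cmod (zhat t k - zval p lab k))\<^sup>2) \<le> sqrt (real M * X\<^sup>2)"
      by (rule real_sqrt_le_mono)
    also have "\<dots> = sqrt (real M) * X" using X0 by (simp add: real_sqrt_mult)
    finally show "sqrt (\<Sum>k\<in>{1..M}. (cmod (zhat t k - zval p lab k))\<^sup>2) \<le> (sqrt (real M) * C) * exp (- \<delta> * (t - t0))"
      unfolding X_def by (simp add: mult.assoc)
  qed
  thus ?thesis using d0 by blast
qed

end
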